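(* Let $U,X,Y,W,Z$ be Banach spaces, let $S_1=\operatorname{Sys}(A,B,C)$ be a $(U,X,Y)$-relation and $S_2=\operatorname{Sys}(E,F,G)$ a $(Y,W,Z)$-relation, and assume $E$ is bounded. Fix any $\lambda\in\mathbb{C}\setminus\operatorname{Spec}(A)$ and let $C_\lambda:=C(\lambda-A)^{-1}:X\to Y$ (a bounded operator). Then $$S_2\circ S_1\cong \operatorname{Sys}\left(\begin{bmatrix} A & 0\\ \lambda FC_\lambda-EFC_\lambda & E\end{bmatrix},\ \begin{bmatrix} B\\ FC_\lambda B\end{bmatrix},\ \begin{bmatrix} -GFC_\lambda & G\end{bmatrix}\right).$$ Furthermore, if $U=Z$, then $\operatorname{Close}(S_2\circ S_1)$ is isomorphic to $$\operatorname{Sys}\left(\begin{bmatrix} A&0\\0&E\end{bmatrix}+\begin{bmatrix} -BGFC_\lambda & BG\\ \lambda FC_\lambda-EFC_\lambda-FC_\lambda BGFC_\lambda & FC_\lambda BG\end{bmatrix},\ 0,\ 0\right).$$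
   Context: For Banach spaces $U,X,Y$, a $(U,X,Y)$-relation is any subset of $C^0(\mathbb{R}_{\ge 0},U)\times C^0(\mathbb{R}_{\ge 0},X)\times C^0(\mathbb{R}_{\ge 0},Y)$; elements $(u,x,y)$ are input, state, output, and $X$ is the state space. If $A$ generates a strongly continuous semigroup on $X$, $B:U\to X$ is bounded and $C:\operatorname{Dom}(A)\to Y$ is bounded for the graph norm, $\operatorname{Sys}(A,B,C)$ is the $(U,X,Y)$-relation of all $(u,x,y)$ with $u\in C^0(\mathbb{R}_{\ge0},U)$, $x\in C^0(\mathbb{R}_{\ge0},\operatorname{Dom}(A))\cap C^1(\mathbb{R}_{\ge0},X)$, $y\in C^0(\mathbb{R}_{\ge0},Y)$, $\dot x=Ax+Bu$, $y=Cx$. In $\operatorname{Sys}(E,F,G)$ the same conditions are assumed on $E,F,G$ (with state space $W$). Serial composition: for a $(U_1,X_1,Y_1)$-relation $S_1$ and a $(Y_1,X_2,Y_2)$-relation $S_2$, $S_2\circ S_1$ is the $(U_1,X_1\times X_2,Y_2)$-relation of all $(u_1,(x_1,x_2),y_2)$ for which some $y_1$ satisfies $(u_1,x_1,y_1)\in S_1$ and $(y_1,x_2,y_2)\in S_2$ (products carry the product norm). For a $(U,X,U)$-relation $S$, $\operatorname{Close}(S)$ is the $(\{0\},X,\{0\})$-relation of all $(0,x,0)$ such that $(u,x,u)\in S$ for some $u$. Two relations $S_1$ (a $(U,X_1,Y)$-relation) and $S_2$ (a $(U,X_2,Y)$-relation) are isomorphic, $S_1\cong S_2$, if there is a topological linear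 isomorphism $\phi:X_1\to X_2$ such that $(u,x,y)\mapsto(u,\phi\circ x,y)$ maps $S_1$ onto $S_2$. *)

theory Defs
  imports "HOL-Analysis.Analysis"
begin

class complex_banach = banach +
  fixes cscale :: "complex \<Rightarrow> 'a \<Rightarrow> 'a" (infixr \<open>*\<^sub>C\<close> 75)
  assumes cscale_add_right: "a *\<^sub>C (x + y) = a *\<^sub>C x + a *\<^sub>C y"
    and cscale_add_left: "(a + b) *\<^sub>C x = a *\<^sub>C x + b *\<^sub>C x"
    and cscale_cscale: "a *\<^sub>C (b *\<^sub>C x) = (a * b) *\<^sub>C x"
    and cscale_of_real: "(complex_of_real r) *\<^sub>C x = r *\<^sub>R x"
    and norm_cscale: "norm (a *\<^sub>C x) = cmod a * norm x"

instantiation prod :: (complex_banach, complex_banach) complex_banach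
begin
definition cscale_prod_def: "a *\<^sub>C (p :: 'a \<times> 'b) = (a *\<^sub>C fst p, a *\<^sub>C snd p)"
instance
proof
  fix a b :: complex and x y :: "'a \<times> 'b" and r :: real
  show "a *\<^sub>C (x + y) = a *\<^sub>C x + a *\<^sub>C y"
    by (simp add: cscale_prod_def cscale_add_right)
  show "(a + b) *\<^sub>C x = a *\<^sub>C x + b *\<^sub>C x"
    by (simp add: cscale_prod_def cscale_add_left)
  show "a *\<^sub>C (b *\<^sub>C x) = (a * b) *\<^sub>C x"
    by (simp add: cscale_prod_def cscale_cscale)
  show "(complex_of_real r) *\<^sub>C x = r *\<^sub>R x"
    by (simp add: cscale_prod_def cscale_of_real scaleR_prod_def)
  show "norm (a *\<^sub>C x) = cmod a * norm x"
    by (simp add: cscale_prod_def norm_prod_def norm_cscale power_mult_distrib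
        flip: distrib_left, simp add: real_sqrt_mult)
qed
end

text \<open>The zero space \<open>{0}\<close>, realised as the type \<open>unit\<close>.\<close>

instantiation unit :: real_normed_vector
begin
definition "0 = ()"
definition "x + y = ()"
definition "scaleR r (x::unit) = ()"
definition "norm (x::unit) = 0"
definition "sgn (x::unit) = ()"
definition "dist (x::unit) y = 0"
definition "uniformity = (INF e\<in>{0 <..}. principal {(x::unit, y). dist x y < e})"
definition "open (U :: unit set) = (\<forall>x\<in>U. eventually (\<lambda>(x', y). x' = x \<longrightarrow> y \<in> U) uniformity)"
instance
  by intro_classes (auto simp: zero_unit_def plus_unit_def
       scaleR_unit_def norm_unit_def sgn_unit_def dist_unit_def
       uniformity_unit_def open_unit_def)
end

instance unit :: banach
proof
  fix X :: "nat \<Rightarrow> unit"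
  have "X = (\<lambda>_. ())" by auto
  then show "convergent X" by (simp add: convergent_const)
qed

instantiation unit :: complex_banach
begin
definition "cscale a (x::unit) = ()"
instance
  by intro_classes (auto simp: norm_unit_def)
end

definition cblinear :: "('a::complex_banach \<Rightarrow> 'b::complex_banach) \<Rightarrow> bool" where
  "cblinear f \<longleftrightarrow> bounded_linear f \<and> (\<forall>c x. f (c *\<^sub>C x) = c *\<^sub>C f x)"

definition top_lin_iso :: "('a::complex_banach \<Rightarrow> 'b::complex_banach) \<Rightarrow> bool" where
  "top_lin_iso \<phi> \<longleftrightarrow> bij \<phi> \<and> cblinear \<phi> \<and> cblinear (inv \<phi>)"

text \<open>An (unbounded) operator is
  given by its domain \<open>D\<close> and its action \<open>A\<close> (values of \<open>A\<close> outside \<open>D\<close> are irrelevant).\<close>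
definition C0_semigroup :: "(real \<Rightarrow> 'a::complex_banach \<Rightarrow> 'a) \<Rightarrow> bool" where
  "C0_semigroup T \<longleftrightarrow> (\<forall>t\<ge>0. cblinear (T t)) \<and> T 0 = id
     \<and> (\<forall>s\<ge>0. \<forall>t\<ge>0. T (s + t) = T s \<circ> T t)
     \<and> (\<forall>x. ((\<lambda>t. T t x) \<longlongrightarrow> x) (at_right 0))"

definition generates_C0 :: "'a::complex_banach set \<Rightarrow> ('a \<Rightarrow> 'a) \<Rightarrow> bool" where
  "generates_C0 D A \<longleftrightarrow> (\<exists>T. C0_semigroup T
     \<and> D = {x. \<exists>y. ((\<lambda>h. (1 / h) *\<^sub>R (T h x - x)) \<longlongrightarrow> y) (at_right 0)}
     \<and> (\<forall>x\<in>D. ((\<lambda>h. (1 / h) *\<^sub>R (T h x - x)) \<longlongrightarrow> A x) (at_right 0)))"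

definition graph_bounded :: "'a::complex_banach set \<Rightarrow> ('a \<Rightarrow> 'a) \<Rightarrow> ('a \<Rightarrow> 'b::complex_banach) \<Rightarrow> bool" where
  "graph_bounded D A C \<longleftrightarrow>
     (\<forall>x\<in>D. \<forall>y\<in>D. C (x + y) = C x + C y) \<and> (\<forall>c. \<forall>x\<in>D. C (c *\<^sub>C x) = c *\<^sub>C C x)
     \<and> (\<exists>K. \<forall>x\<in>D. norm (C x) \<le> K * (norm x + norm (A x)))"

definition resolvent :: "'a::complex_banach set \<Rightarrow> ('a \<Rightarrow> 'a) \<Rightarrow> complex \<Rightarrow> 'a \<Rightarrow> 'a" where
  "resolvent D A l = inv_into D (\<lambda>x. l *\<^sub>C x - A x)"

definition spectrum :: "'a::complex_banach set \<Rightarrow> ('a \<Rightarrow> 'a) \<Rightarrow> complex set" where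
  "spectrum D A = {l. \<not> (bij_betw (\<lambda>x. l *\<^sub>C x - A x) D UNIV \<and> cblinear (resolvent D A l))}"

text \<open>Functions on \<open>\<real>\<^sub>\<ge>\<^sub>0\<close> are represented as functions on \<open>\<real>\<close> that vanish on the
  negative reals; \<open>C\<^sup>0(\<real>\<^sub>\<ge>\<^sub>0, V)\<close> is the set of those that are continuous on \<open>{0..}\<close>.\<close>
definition C0fun :: "(real \<Rightarrow> 'a::complex_banach) \<Rightarrow> bool" where
  "C0fun f \<longleftrightarrow> continuous_on {0..} f \<and> (\<forall>t<0. f t = 0)"

type_synonym ('u, 'x, 'y) relation = "((real \<Rightarrow> 'u) \<times> (real \<Rightarrow> 'x) \<times> (real \<Rightarrow> 'y)) set"

definition Sys :: "'x::complex_banach set \<Rightarrow> ('x \<Rightarrow> 'x) \<Rightarrow> ('u::complex_banach \<Rightarrow> 'x)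
    \<Rightarrow> ('x \<Rightarrow> 'y::complex_banach) \<Rightarrow> ('u, 'x, 'y) relation" where
  "Sys D A B C = {(u, x, y). C0fun u \<and> C0fun x \<and> C0fun y
     \<and> (\<forall>t\<ge>0. x t \<in> D) \<and> continuous_on {0..} (\<lambda>t. A (x t))
     \<and> (\<exists>x'. continuous_on {0..} x'
           \<and> (\<forall>t\<ge>0. (x has_vector_derivative x' t) (at t within {0..})
                    \<and> x' t = A (x t) + B (u t)))
     \<and> (\<forall>t\<ge>0. y t = C (x t))}"

definition serial :: "('u, 'x1, 'y1) relation \<Rightarrow> ('y1, 'x2, 'y2) relation \<Rightarrow> ('u, 'x1 \<times> 'x2, 'y2) relation"
  where "serial S1 S2 = {(u, (\<lambda>t. (x1 t, x2 t)), y2) | u x1 x2 y2.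
            \<exists>y1. (u, x1, y1) \<in> S1 \<and> (y1, x2, y2) \<in> S2}"

definition Close :: "('u, 'x, 'u) relation \<Rightarrow> (unit, 'x, unit) relation" where
  "Close S = {((\<lambda>_. ()), x, (\<lambda>_. ())) | x. \<exists>u. (u, x, u) \<in> S}"

definition rel_iso :: "('u, 'x1::complex_banach, 'y) relation \<Rightarrow> ('u, 'x2::complex_banach, 'y) relation \<Rightarrow> bool"
  (infix \<open>\<cong>\<^sub>R\<close> 50) where
  "S1 \<cong>\<^sub>R S2 \<longleftrightarrow> (\<exists>\<phi>. top_lin_iso \<phi> \<and> (\<lambda>(u, x, y). (u, \<phi> \<circ> x, y)) ` S1 = S2)"

end

theory Submission
  imports Defs
begin


lemma cbl_bl: "cblinear f \<Longrightarrow> bounded_linear f" by (simp add: cblinear_def)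
lemma cbl_sc: "cblinear f \<Longrightarrow> f (c *\<^sub>C x) = c *\<^sub>C f x" by (simp add: cblinear_def)
lemma cbl_comp: "cblinear f \<Longrightarrow> cblinear g \<Longrightarrow> cblinear (\<lambda>x. f (g x))"
  by (simp add: cblinear_def bounded_linear_compose)

lemma bl_cscale: "bounded_linear (\<lambda>v::'a::complex_banach. c *\<^sub>C v)"
proof (rule bounded_linear_intro[where K="cmod c"])
  show "c *\<^sub>C (x + y) = c *\<^sub>C x + c *\<^sub>C y" for x y :: 'a by (rule cscale_add_right)
  show "c *\<^sub>C (r *\<^sub>R x) = r *\<^sub>R (c *\<^sub>C x)" for r and x :: 'a
    by (simp add: cscale_of_real[symmetric] cscale_cscale mult.commute)
  show "norm (c *\<^sub>C x) \<le> norm x * cmod c" for x :: 'a by (simp add: norm_cscale mult.commute)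
qed

lemma gb_univ:
  assumes "graph_bounded UNIV E G" "bounded_linear E"
  shows "cblinear G"
proof -
  from assms(1) have add: "\<And>x y. G (x+y) = G x + G y" and sc: "\<And>c x. G (c *\<^sub>C x) = c *\<^sub>C G x"
    and "\<exists>K. \<forall>x. norm (G x) \<le> K * (norm x + norm (E x))" by (auto simp: graph_bounded_def)
  then obtain K where K: "\<And>x. norm (G x) \<le> K * (norm x + norm (E x))" by blast
  obtain M where M: "\<And>x. norm (E x) \<le> norm x * M" "M > 0"
    using bounded_linear.pos_bounded[OF assms(2)] by blast
  have "norm (G x) \<le> norm x * (max K 0 * (1 + M))" for x
  proof -
    have "norm (G x) \<le> K * (norm x + norm (E x))" by (rule K)
    also have "\<dots> \<le> max K 0 * (norm x + norm (E x))" by (intro mult_right_mono) auto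
    also have "\<dots> \<le> max K 0 * (norm x + norm x * M)" using M by (intro mult_left_mono) auto
    finally show ?thesis by (simp add: algebra_simps)
  qed
  moreover have "G (r *\<^sub>R x) = r *\<^sub>R G x" for r x
    using sc[of "complex_of_real r"] by (simp add: cscale_of_real)
  ultimately have "bounded_linear G" using add by (intro bounded_linear_intro) 
  then show ?thesis using sc by (simp add: cblinear_def)
qed

lemma resolv:
  assumes "lam \<notin> spectrum D A"
  shows "cblinear (resolvent D A lam)"
    and "\<And>y. resolvent D A lam y \<in> D"
    and "\<And>y. lam *\<^sub>C resolvent D A lam y - A (resolvent D A lam y) = y"
    and "\<And>x. x \<in> D \<Longrightarrow> resolvent D A lam (lam *\<^sub>C x - A x) = x"
proof -
  have b: "bij_betw (\<lambda>x. lam *\<^sub>C x - A x) D UNIV" and c: "cblinear (resolvent D A lam)"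
    using assms by (auto simp: spectrum_def)
  show "cblinear (resolvent D A lam)" by (rule c)
  show "resolvent D A lam y \<in> D" for y unfolding resolvent_def using b
    by (intro inv_into_into) (auto simp: bij_betw_def)
  show "lam *\<^sub>C resolvent D A lam y - A (resolvent D A lam y) = y" for y
    unfolding resolvent_def using b f_inv_into_f[of y "\<lambda>x. lam *\<^sub>C x - A x" D]
    by (auto simp: bij_betw_def)
  show "resolvent D A lam (lam *\<^sub>C x - A x) = x" if "x \<in> D" for x
    unfolding resolvent_def using b that inv_into_f_f[of "\<lambda>x. lam *\<^sub>C x - A x" D x]
    by (simp add: bij_betw_def)
qed

lemma Cl_cbl:
  assumes gb: "graph_bounded D A C" and lam: "lam \<notin> spectrum D A"
  shows "cblinear (\<lambda>x. C (resolvent D A lam x))"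
proof -
  let ?R = "resolvent D A lam"
  note R = resolv[OF lam]
  from gb have add: "\<And>x y. x\<in>D \<Longrightarrow> y\<in>D \<Longrightarrow> C (x+y) = C x + C y"
    and sc: "\<And>c x. x\<in>D \<Longrightarrow> C (c *\<^sub>C x) = c *\<^sub>C C x"
    and "\<exists>K. \<forall>x\<in>D. norm (C x) \<le> K * (norm x + norm (A x))" by (auto simp: graph_bounded_def)
  then obtain K where K: "\<And>x. x\<in>D \<Longrightarrow> norm (C x) \<le> K * (norm x + norm (A x))" by blast
  have blR: "bounded_linear ?R" using R(1) by (simp add: cblinear_def)
  interpret RR: bounded_linear ?R by (rule blR)
  obtain M where M: "\<And>x. norm (?R x) \<le> norm x * M" "M>0"
    using bounded_linear.pos_bounded[OF blR] by blast
  have ARx: "A (?R x) = lam *\<^sub>C ?R x - x" for x using R(3)[of x] by (simp add: algebra_simps)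
  have bnd: "norm (C (?R x)) \<le> norm x * (max K 0 * (M + cmod lam * M + 1))" for x
  proof -
    have "norm (C (?R x)) \<le> K * (norm (?R x) + norm (A (?R x)))" using K R(2) by blast
    also have "\<dots> \<le> max K 0 * (norm (?R x) + norm (A (?R x)))" by (intro mult_right_mono) auto
    also have "norm (A (?R x)) \<le> cmod lam * norm (?R x) + norm x"
      unfolding ARx using norm_triangle_ineq4[of "lam *\<^sub>C ?R x" x] by (simp add: norm_cscale)
    then have "norm (?R x) + norm (A (?R x)) \<le> norm x * M + cmod lam * (norm x * M) + norm x"
      using M(1)[of x] mult_left_mono[OF M(1)[of x], of "cmod lam"] by simp
    then have "max K 0 * (norm (?R x) + norm (A (?R x))) \<le> max K 0 * (norm x * M + cmod lam * (norm x * M) + norm x)"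
      by (intro mult_left_mono) auto
    finally show ?thesis by (simp add: algebra_simps)
  qed
  have "bounded_linear (\<lambda>x. C (?R x))"
  proof (rule bounded_linear_intro[OF _ _ bnd])
    show "C (?R (x + y)) = C (?R x) + C (?R y)" for x y
      using add[OF R(2) R(2)] RR.add by simp
    show "C (?R (r *\<^sub>R x)) = r *\<^sub>R C (?R x)" for r x
      using sc[OF R(2), of "complex_of_real r"] RR.scaleR
      by (simp add: cscale_of_real)
  qed
  moreover have "C (?R (c *\<^sub>C x)) = c *\<^sub>C C (?R x)" for c x
    using sc[OF R(2)] cbl_sc[OF R(1)] by simp
  ultimately show ?thesis by (simp add: cblinear_def)
qed

lemma C0fun_unit: "C0fun (\<lambda>_. ())"
  unfolding C0fun_def by (auto intro!: continuous_on_const simp: zero_unit_def)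



theorem proposition2p5:
  fixes DA :: "'x::complex_banach set" and A :: "'x \<Rightarrow> 'x"
    and B :: "'u::complex_banach \<Rightarrow> 'x" and C :: "'x \<Rightarrow> 'y::complex_banach"
    and E :: "'w::complex_banach \<Rightarrow> 'w" and F :: "'y \<Rightarrow> 'w" and G :: "'w \<Rightarrow> 'z::complex_banach"
    and lam :: complex
  assumes A_gen: "generates_C0 DA A"
    and B_bdd: "cblinear B"
    and C_bdd: "graph_bounded DA A C"
    and E_gen: "generates_C0 UNIV E"
    and E_bdd: "cblinear E"
    and F_bdd: "cblinear F"
    and G_bdd: "graph_bounded UNIV E G"
    and lam: "lam \<notin> spectrum DA A"
  defines "C\<^sub>l \<equiv> (\<lambda>x. C (resolvent DA A lam x))"
  shows "serial (Sys DA A B C) (Sys UNIV E F G) \<cong>\<^sub>R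
           Sys (DA \<times> UNIV)
             (\<lambda>(x, w). (A x, lam *\<^sub>C F (C\<^sub>l x) - E (F (C\<^sub>l x)) + E w))
             (\<lambda>u. (B u, F (C\<^sub>l (B u))))
             (\<lambda>(x, w). - G (F (C\<^sub>l x)) + G w)
       \<and> (\<forall>G' :: 'w \<Rightarrow> 'u. graph_bounded UNIV E G' \<longrightarrow>
           Close (serial (Sys DA A B C) (Sys UNIV E F G')) \<cong>\<^sub>R
           Sys (DA \<times> UNIV)
             (\<lambda>(x, w). (A x + (- B (G' (F (C\<^sub>l x))) + B (G' w)),
                        E w + (lam *\<^sub>C F (C\<^sub>l x) - E (F (C\<^sub>l x)) - F (C\<^sub>l (B (G' (F (C\<^sub>l x)))))
                               + F (C\<^sub>l (B (G' w))))))
             (\<lambda>_::unit. (0, 0))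
             (\<lambda>_. ()))"
proof -
  have blB: "bounded_linear B" using B_bdd by (rule cbl_bl)
  have blE: "bounded_linear E" using E_bdd by (rule cbl_bl)
  have blF: "bounded_linear F" using F_bdd by (rule cbl_bl)
  have cG: "cblinear G" by (rule gb_univ[OF G_bdd blE])
  have blG: "bounded_linear G" using cG by (rule cbl_bl)
  have cCl: "cblinear C\<^sub>l" unfolding C\<^sub>l_def by (rule Cl_cbl[OF C_bdd lam])
  have blCl: "bounded_linear C\<^sub>l" using cCl by (rule cbl_bl)
  interpret Bl: bounded_linear B by (rule blB)
  interpret El: bounded_linear E by (rule blE)
  interpret Fl: bounded_linear F by (rule blF)
  interpret Gl: bounded_linear G by (rule blG)
  interpret Cll: bounded_linear C\<^sub>l by (rule blCl)
  have Ceq: "\<And>x. x \<in> DA \<Longrightarrow> C x = C\<^sub>l (lam *\<^sub>C x - A x)"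
    unfolding C\<^sub>l_def using resolv(4)[OF lam] by simp
  have Clsc: "C\<^sub>l (c *\<^sub>C x) = c *\<^sub>C C\<^sub>l x" for c x
    using cbl_sc[OF cCl] by simp
  have Fsc: "F (c *\<^sub>C x) = c *\<^sub>C F x" for c x
    using cbl_sc[OF F_bdd] by simp
  have Ceq2: "\<And>x. x \<in> DA \<Longrightarrow> C x = lam *\<^sub>C C\<^sub>l x - C\<^sub>l (A x)"
    using Ceq by (simp add: Cll.diff Clsc)
  have FClsc: "F (C\<^sub>l (c *\<^sub>C x)) = c *\<^sub>C F (C\<^sub>l x)" for c x
    using cbl_sc[OF cCl] cbl_sc[OF F_bdd] by simp
  interpret scl: bounded_linear "\<lambda>v::'w. c *\<^sub>C v" for c by (rule bl_cscale)
  interpret sclx: bounded_linear "\<lambda>v::'x. c *\<^sub>C v" for c by (rule bl_cscale)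
  define \<phi> :: "'x \<times> 'w \<Rightarrow> 'x \<times> 'w" where "\<phi> = (\<lambda>(x, w). (x, w + F (C\<^sub>l x)))"
  define \<psi> :: "'x \<times> 'w \<Rightarrow> 'x \<times> 'w" where "\<psi> = (\<lambda>(x, w). (x, w - F (C\<^sub>l x)))"
  have \<phi>\<psi>: "\<phi> (\<psi> p) = p" "\<psi> (\<phi> p) = p" for p by (auto simp: \<phi>_def \<psi>_def split: prod.splits)
  have \<phi>\<psi>o: "\<phi> \<circ> (\<psi> \<circ> z) = z" for z by (simp add: fun_eq_iff \<phi>\<psi>)
  have iso: "top_lin_iso \<phi>"
  proof -
    have inv: "inv \<phi> = \<psi>" by (rule inv_equality) (use \<phi>\<psi> in auto)
    have bij: "bij \<phi>" by (rule o_bij[of \<psi>]) (auto simp: \<phi>\<psi> fun_eq_iff)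
    have "bounded_linear (\<lambda>p::'x\<times>'w. F (C\<^sub>l (fst p)))"
      by (intro bounded_linear_compose[OF blF] bounded_linear_compose[OF blCl] bounded_linear_fst)
    then have b1: "bounded_linear (\<lambda>p::'x\<times>'w. (fst p, snd p + F (C\<^sub>l (fst p))))"
      and b2: "bounded_linear (\<lambda>p::'x\<times>'w. (fst p, snd p - F (C\<^sub>l (fst p))))"
      by (auto intro!: bounded_linear_Pair bounded_linear_add bounded_linear_sub bounded_linear_fst bounded_linear_snd)
    have e1: "\<phi> = (\<lambda>p. (fst p, snd p + F (C\<^sub>l (fst p))))" by (auto simp: \<phi>_def fun_eq_iff)
    have e2: "\<psi> = (\<lambda>p. (fst p, snd p - F (C\<^sub>l (fst p))))" by (auto simp: \<psi>_def fun_eq_iff)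
    have "cblinear \<phi>" unfolding cblinear_def e1
      using b1 by (simp add: cscale_prod_def cscale_add_right FClsc)
    moreover have "cblinear \<psi>" unfolding cblinear_def e2
      using b2 by (simp add: cscale_prod_def scl.diff FClsc)
    ultimately show ?thesis using bij inv by (simp add: top_lin_iso_def)
  qed
  have fwd1: "(u, \<phi> \<circ> z, y) \<in> Sys (DA \<times> UNIV)
             (\<lambda>(x, w). (A x, lam *\<^sub>C F (C\<^sub>l x) - E (F (C\<^sub>l x)) + E w))
             (\<lambda>u. (B u, F (C\<^sub>l (B u))))
             (\<lambda>(x, w). - G (F (C\<^sub>l x)) + G w)"
    if "(u, z, y) \<in> serial (Sys DA A B C) (Sys UNIV E F G)" for u z y
  proof -
    from that obtain x1 x2 y1 where z: "z = (\<lambda>t. (x1 t, x2 t))"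
      and S1: "(u, x1, y1) \<in> Sys DA A B C" and S2: "(y1, x2, y) \<in> Sys UNIV E F G"
      unfolding serial_def by blast
    from S1 have u: "C0fun u" and x1: "C0fun x1" and y1: "C0fun y1"
      and x1D: "\<And>t. t \<ge> 0 \<Longrightarrow> x1 t \<in> DA"
      and Ax1: "continuous_on {0..} (\<lambda>t. A (x1 t))"
      and y1e: "\<And>t. t \<ge> 0 \<Longrightarrow> y1 t = C (x1 t)"
      and "\<exists>x'. continuous_on {0..} x' \<and> (\<forall>t\<ge>0. (x1 has_vector_derivative x' t) (at t within {0..})
                    \<and> x' t = A (x1 t) + B (u t))"
      by (simp_all add: Sys_def)
    then obtain x1' where x1'c: "continuous_on {0..} x1'"
      and x1'de: "\<forall>t\<ge>0. (x1 has_vector_derivative x1' t) (at t within {0..}) \<and> x1' t = A (x1 t) + B (u t)"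
      by blast
    have x1'd: "\<And>t. t \<ge> 0 \<Longrightarrow> (x1 has_vector_derivative x1' t) (at t within {0..})"
      and x1'e: "\<And>t. t \<ge> 0 \<Longrightarrow> x1' t = A (x1 t) + B (u t)" using x1'de by auto
    from S2 have x2: "C0fun x2" and y: "C0fun y"
      and ye: "\<And>t. t \<ge> 0 \<Longrightarrow> y t = G (x2 t)"
      and "\<exists>x'. continuous_on {0..} x' \<and> (\<forall>t\<ge>0. (x2 has_vector_derivative x' t) (at t within {0..})
                    \<and> x' t = E (x2 t) + F (y1 t))"
      by (simp_all add: Sys_def)
    then obtain x2' where x2'c: "continuous_on {0..} x2'"
      and x2'de: "\<forall>t\<ge>0. (x2 has_vector_derivative x2' t) (at t within {0..}) \<and> x2' t = E (x2 t) + F (y1 t)"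
      by blast
    have x2'd: "\<And>t. t \<ge> 0 \<Longrightarrow> (x2 has_vector_derivative x2' t) (at t within {0..})"
      and x2'e: "\<And>t. t \<ge> 0 \<Longrightarrow> x2' t = E (x2 t) + F (y1 t)" using x2'de by auto
    have x1c: "continuous_on {0..} x1" and x10: "\<And>t. t < 0 \<Longrightarrow> x1 t = 0"
      using x1 by (auto simp: C0fun_def)
    have x2c: "continuous_on {0..} x2" and x20: "\<And>t. t < 0 \<Longrightarrow> x2 t = 0"
      using x2 by (auto simp: C0fun_def)
    have phz: "\<phi> \<circ> z = (\<lambda>t. (x1 t, x2 t + F (C\<^sub>l (x1 t))))" by (simp add: z \<phi>_def fun_eq_iff)
    have c1: "C0fun (\<lambda>t. (x1 t, x2 t + F (C\<^sub>l (x1 t))))"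
      unfolding C0fun_def using x1c x2c x10 x20
      by (auto intro!: continuous_intros Fl.continuous_on Cll.continuous_on simp: zero_prod_def Fl.zero Cll.zero)
    have c2: "continuous_on {0..} (\<lambda>t. (A (x1 t), lam *\<^sub>C F (C\<^sub>l (x1 t)) - E (F (C\<^sub>l (x1 t))) + E (x2 t + F (C\<^sub>l (x1 t)))))"
      using x1c x2c Ax1
      by (auto intro!: continuous_intros Fl.continuous_on Cll.continuous_on El.continuous_on scl.continuous_on)
    have d: "((\<lambda>t. (x1 t, x2 t + F (C\<^sub>l (x1 t)))) has_vector_derivative
               (x1' t, x2' t + F (C\<^sub>l (x1' t)))) (at t within {0..})" if "t \<ge> 0" for t
      by (intro has_vector_derivative_Pair has_vector_derivative_add x1'd x2'd that
            Fl.has_vector_derivative Cll.has_vector_derivative)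
    have e: "(x1' t, x2' t + F (C\<^sub>l (x1' t))) =
        (A (x1 t), lam *\<^sub>C F (C\<^sub>l (x1 t)) - E (F (C\<^sub>l (x1 t))) + E (x2 t + F (C\<^sub>l (x1 t))))
        + (B (u t), F (C\<^sub>l (B (u t))))" if "t \<ge> 0" for t
      using that x1'e x2'e y1e Ceq2 x1D
      by (simp add: Fl.add Fl.diff Cll.add Cll.diff El.add FClsc Fsc Clsc algebra_simps)
    have c3: "continuous_on {0..} (\<lambda>t. (x1' t, x2' t + F (C\<^sub>l (x1' t))))"
      using x1'c x2'c by (auto intro!: continuous_intros Fl.continuous_on Cll.continuous_on)
    have ex: "\<exists>x'. continuous_on {0..} x' \<and> (\<forall>t\<ge>0. ((\<lambda>t. (x1 t, x2 t + F (C\<^sub>l (x1 t)))) has_vector_derivative x' t) (at t within {0..})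
       \<and> x' t = (A (x1 t), lam *\<^sub>C F (C\<^sub>l (x1 t)) - E (F (C\<^sub>l (x1 t))) + E (x2 t + F (C\<^sub>l (x1 t))))
        + (B (u t), F (C\<^sub>l (B (u t)))))"
      using c3 d e by blast
    have ye2: "\<forall>t\<ge>0. y t = - G (F (C\<^sub>l (x1 t))) + G (x2 t + F (C\<^sub>l (x1 t)))"
      using ye by (simp add: Gl.add)
    have x1D2: "\<forall>t\<ge>0. (x1 t, x2 t + F (C\<^sub>l (x1 t))) \<in> DA \<times> UNIV" using x1D by simp
    show ?thesis unfolding phz Sys_def mem_Collect_eq prod.case
      using u c1 y x1D2 c2 ex ye2 by (intro conjI)
  qed
  have bwd1: "(u, \<psi> \<circ> z, y) \<in> serial (Sys DA A B C) (Sys UNIV E F G)"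
    if "(u, z, y) \<in> Sys (DA \<times> UNIV)
             (\<lambda>(x, w). (A x, lam *\<^sub>C F (C\<^sub>l x) - E (F (C\<^sub>l x)) + E w))
             (\<lambda>u. (B u, F (C\<^sub>l (B u))))
             (\<lambda>(x, w). - G (F (C\<^sub>l x)) + G w)" for u z y
  proof -
    define x where "x = (\<lambda>t. fst (z t))"
    define w where "w = (\<lambda>t. snd (z t))"
    have z: "z = (\<lambda>t. (x t, w t))" by (simp add: x_def w_def)
    from that[unfolded z] have u: "C0fun u" and zc: "C0fun (\<lambda>t. (x t, w t))" and y: "C0fun y"
      and xD: "\<And>t. t \<ge> 0 \<Longrightarrow> x t \<in> DA"
      and Az: "continuous_on {0..} (\<lambda>t. (A (x t), lam *\<^sub>C F (C\<^sub>l (x t)) - E (F (C\<^sub>l (x t))) + E (w t)))"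
      and ye: "\<And>t. t \<ge> 0 \<Longrightarrow> y t = - G (F (C\<^sub>l (x t))) + G (w t)"
      and "\<exists>z'. continuous_on {0..} z' \<and> (\<forall>t\<ge>0. ((\<lambda>t. (x t, w t)) has_vector_derivative z' t) (at t within {0..})
         \<and> z' t = (A (x t), lam *\<^sub>C F (C\<^sub>l (x t)) - E (F (C\<^sub>l (x t))) + E (w t)) + (B (u t), F (C\<^sub>l (B (u t)))))"
      by (simp_all add: Sys_def)
    then obtain z' where z'c: "continuous_on {0..} z'"
      and z'de: "\<forall>t\<ge>0. ((\<lambda>t. (x t, w t)) has_vector_derivative z' t) (at t within {0..})
         \<and> z' t = (A (x t), lam *\<^sub>C F (C\<^sub>l (x t)) - E (F (C\<^sub>l (x t))) + E (w t)) + (B (u t), F (C\<^sub>l (B (u t))))"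
      by blast
    have zd: "\<And>t. t \<ge> 0 \<Longrightarrow> ((\<lambda>t. (x t, w t)) has_vector_derivative z' t) (at t within {0..})"
      and ze: "\<And>t. t \<ge> 0 \<Longrightarrow> z' t = (A (x t), lam *\<^sub>C F (C\<^sub>l (x t)) - E (F (C\<^sub>l (x t))) + E (w t)) + (B (u t), F (C\<^sub>l (B (u t))))"
      using z'de by auto
    have xc: "continuous_on {0..} x" and wc: "continuous_on {0..} w"
      using continuous_on_fst[OF zc[unfolded C0fun_def, THEN conjunct1]]
        continuous_on_snd[OF zc[unfolded C0fun_def, THEN conjunct1]] by auto
    have x0: "\<And>t. t < 0 \<Longrightarrow> x t = 0" and w0: "\<And>t. t < 0 \<Longrightarrow> w t = 0"
      using zc by (auto simp: C0fun_def zero_prod_def)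
    have Ax: "continuous_on {0..} (\<lambda>t. A (x t))" using continuous_on_fst[OF Az] by simp
    define x2 where "x2 = (\<lambda>t. w t - F (C\<^sub>l (x t)))"
    define y1 where "y1 = (\<lambda>t. if t < 0 then 0 else C (x t))"
    define x' where "x' = (\<lambda>t. fst (z' t))"
    define x2' where "x2' = (\<lambda>t. snd (z' t) - F (C\<^sub>l (fst (z' t))))"
    have psz: "\<psi> \<circ> z = (\<lambda>t. (x t, x2 t))" by (simp add: z \<psi>_def x2_def fun_eq_iff)
    have x2c: "continuous_on {0..} x2" unfolding x2_def using xc wc
      by (auto intro!: continuous_intros Fl.continuous_on Cll.continuous_on)
    have x20: "\<And>t. t < 0 \<Longrightarrow> x2 t = 0" unfolding x2_def using x0 w0 by (simp add: Fl.zero Cll.zero)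
    have y1c: "continuous_on {0..} y1"
    proof (rule continuous_on_eq)
      show "continuous_on {0..} (\<lambda>t. C\<^sub>l (lam *\<^sub>C x t - A (x t)))" using xc Ax
        by (auto intro!: continuous_intros Cll.continuous_on sclx.continuous_on)
      show "C\<^sub>l (lam *\<^sub>C x t - A (x t)) = y1 t" if "t \<in> {0..}" for t
        using that xD Ceq by (simp add: y1_def)
    qed
    have y10: "\<And>t. t < 0 \<Longrightarrow> y1 t = 0" by (simp add: y1_def)
    have x'c: "continuous_on {0..} x'" unfolding x'_def using z'c by (intro continuous_intros)
    have x2'c: "continuous_on {0..} x2'" unfolding x2'_def using z'c
      by (auto intro!: continuous_intros Fl.continuous_on Cll.continuous_on)
    have x'd: "(x has_vector_derivative x' t) (at t within {0..})" if "t \<ge> 0" for t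
      using bounded_linear.has_vector_derivative[OF bounded_linear_fst zd[OF that]]
      by (simp add: x'_def)
    have x2'd: "(x2 has_vector_derivative x2' t) (at t within {0..})" if "t \<ge> 0" for t
    proof -
      have "((\<lambda>t. snd (x t, w t) - F (C\<^sub>l (fst (x t, w t)))) has_vector_derivative x2' t) (at t within {0..})"
        unfolding x2'_def
        by (intro has_vector_derivative_diff bounded_linear.has_vector_derivative[OF bounded_linear_snd zd[OF that]]
             Fl.has_vector_derivative Cll.has_vector_derivative
             bounded_linear.has_vector_derivative[OF bounded_linear_fst zd[OF that]])
      then show ?thesis by (simp add: x2_def)
    qed
    have x'e: "x' t = A (x t) + B (u t)" if "t \<ge> 0" for t
      using ze[OF that] by (simp add: x'_def)
    have x2'e: "x2' t = E (x2 t) + F (y1 t)" if "t \<ge> 0" for t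
      using ze[OF that] that xD[OF that]
      by (simp add: Ceq2[OF xD[OF that]] Fsc Clsc x2'_def x2_def y1_def Fl.add Fl.diff Cll.add Cll.diff El.diff FClsc algebra_simps)
    have S1: "(u, x, y1) \<in> Sys DA A B C"
    proof -
      have "C0fun x" using xc x0 by (simp add: C0fun_def)
      moreover have "C0fun y1" using y1c y10 by (simp add: C0fun_def)
      moreover have "\<forall>t\<ge>0. y1 t = C (x t)" by (simp add: y1_def)
      moreover have "\<exists>x'. continuous_on {0..} x' \<and> (\<forall>t\<ge>0. (x has_vector_derivative x' t) (at t within {0..})
                    \<and> x' t = A (x t) + B (u t))" using x'c x'd x'e by blast
      ultimately show ?thesis unfolding Sys_def mem_Collect_eq prod.case using u xD Ax by blast
    qed
    have S2: "(y1, x2, y) \<in> Sys UNIV E F G"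
    proof -
      have "C0fun x2" using x2c x20 by (simp add: C0fun_def)
      moreover have "C0fun y1" using y1c y10 by (simp add: C0fun_def)
      moreover have "\<forall>t\<ge>0. y t = G (x2 t)" using ye by (simp add: x2_def Gl.diff)
      moreover have "continuous_on {0..} (\<lambda>t. E (x2 t))" using x2c by (rule El.continuous_on)
      moreover have "\<exists>x'. continuous_on {0..} x' \<and> (\<forall>t\<ge>0. (x2 has_vector_derivative x' t) (at t within {0..})
                    \<and> x' t = E (x2 t) + F (y1 t))" using x2'c x2'd x2'e by blast
      ultimately show ?thesis unfolding Sys_def mem_Collect_eq prod.case using y by blast
    qed
    show ?thesis unfolding psz serial_def using S1 S2 by blast
  qed
  have part1: "serial (Sys DA A B C) (Sys UNIV E F G) \<cong>\<^sub>R
           Sys (DA \<times> UNIV)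
             (\<lambda>(x, w). (A x, lam *\<^sub>C F (C\<^sub>l x) - E (F (C\<^sub>l x)) + E w))
             (\<lambda>u. (B u, F (C\<^sub>l (B u))))
             (\<lambda>(x, w). - G (F (C\<^sub>l x)) + G w)"
    unfolding rel_iso_def
  proof (intro exI conjI)
    show "top_lin_iso \<phi>" by (rule iso)
    show "(\<lambda>(u, x, y). (u, \<phi> \<circ> x, y)) ` serial (Sys DA A B C) (Sys UNIV E F G) = Sys (DA \<times> UNIV)
             (\<lambda>(x, w). (A x, lam *\<^sub>C F (C\<^sub>l x) - E (F (C\<^sub>l x)) + E w))
             (\<lambda>u. (B u, F (C\<^sub>l (B u))))
             (\<lambda>(x, w). - G (F (C\<^sub>l x)) + G w)" (is "?L = ?R")
    proof
      show "?L \<subseteq> ?R" using fwd1 by auto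
      show "?R \<subseteq> ?L"
      proof
        fix p assume "p \<in> ?R"
        then obtain u z y where p: "p = (u, z, y)" and m: "(u, z, y) \<in> ?R" by (cases p) auto
        from m have "(u, \<psi> \<circ> z, y) \<in> serial (Sys DA A B C) (Sys UNIV E F G)" by (rule bwd1)
        then show "p \<in> ?L" unfolding p
          by (intro image_eqI[where x="(u, \<psi> \<circ> z, y)"]) (simp_all add: \<phi>\<psi>o)
      qed
    qed
  qed
  have part2: "Close (serial (Sys DA A B C) (Sys UNIV E F G')) \<cong>\<^sub>R
           Sys (DA \<times> UNIV)
             (\<lambda>(x, w). (A x + (- B (G' (F (C\<^sub>l x))) + B (G' w)),
                        E w + (lam *\<^sub>C F (C\<^sub>l x) - E (F (C\<^sub>l x)) - F (C\<^sub>l (B (G' (F (C\<^sub>l x)))))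
                               + F (C\<^sub>l (B (G' w))))))
             (\<lambda>_::unit. (0, 0))
             (\<lambda>_. ())" if G'b: "graph_bounded UNIV E G'" for G' :: "'w \<Rightarrow> 'u"
  proof -
    have blG': "bounded_linear G'" using gb_univ[OF G'b blE] by (rule cbl_bl)
    interpret G'l: bounded_linear G' by (rule blG')
    let ?A2 = "(\<lambda>(x, w). (A x + (- B (G' (F (C\<^sub>l x))) + B (G' w)),
                        E w + (lam *\<^sub>C F (C\<^sub>l x) - E (F (C\<^sub>l x)) - F (C\<^sub>l (B (G' (F (C\<^sub>l x)))))
                               + F (C\<^sub>l (B (G' w))))))"
    let ?S = "Sys (DA \<times> UNIV) ?A2 (\<lambda>_::unit. (0, 0)) (\<lambda>_. ())"
    have fwd2: "((\<lambda>_. ()), \<phi> \<circ> z, (\<lambda>_. ())) \<in> ?S"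
      if "(u, z, u) \<in> serial (Sys DA A B C) (Sys UNIV E F G')" for u z
    proof -
      from that obtain x1 x2 y1 where z: "z = (\<lambda>t. (x1 t, x2 t))"
        and S1: "(u, x1, y1) \<in> Sys DA A B C" and S2: "(y1, x2, u) \<in> Sys UNIV E F G'"
        unfolding serial_def by blast
      from S1 have u: "C0fun u" and x1: "C0fun x1" and y1: "C0fun y1"
        and x1D: "\<And>t. t \<ge> 0 \<Longrightarrow> x1 t \<in> DA"
        and Ax1: "continuous_on {0..} (\<lambda>t. A (x1 t))"
        and y1e: "\<And>t. t \<ge> 0 \<Longrightarrow> y1 t = C (x1 t)"
        and "\<exists>x'. continuous_on {0..} x' \<and> (\<forall>t\<ge>0. (x1 has_vector_derivative x' t) (at t within {0..})
                      \<and> x' t = A (x1 t) + B (u t))"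
        by (simp_all add: Sys_def)
      then obtain x1' where x1'c: "continuous_on {0..} x1'"
        and x1'de: "\<forall>t\<ge>0. (x1 has_vector_derivative x1' t) (at t within {0..}) \<and> x1' t = A (x1 t) + B (u t)"
        by blast
      have x1'd: "\<And>t. t \<ge> 0 \<Longrightarrow> (x1 has_vector_derivative x1' t) (at t within {0..})"
        and x1'e: "\<And>t. t \<ge> 0 \<Longrightarrow> x1' t = A (x1 t) + B (u t)" using x1'de by auto
      from S2 have x2: "C0fun x2"
        and ue: "\<And>t. t \<ge> 0 \<Longrightarrow> u t = G' (x2 t)"
        and "\<exists>x'. continuous_on {0..} x' \<and> (\<forall>t\<ge>0. (x2 has_vector_derivative x' t) (at t within {0..})
                      \<and> x' t = E (x2 t) + F (y1 t))"
        by (simp_all add: Sys_def)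
      then obtain x2' where x2'c: "continuous_on {0..} x2'"
        and x2'de: "\<forall>t\<ge>0. (x2 has_vector_derivative x2' t) (at t within {0..}) \<and> x2' t = E (x2 t) + F (y1 t)"
        by blast
      have x2'd: "\<And>t. t \<ge> 0 \<Longrightarrow> (x2 has_vector_derivative x2' t) (at t within {0..})"
        and x2'e: "\<And>t. t \<ge> 0 \<Longrightarrow> x2' t = E (x2 t) + F (y1 t)" using x2'de by auto
      have x1c: "continuous_on {0..} x1" and x10: "\<And>t. t < 0 \<Longrightarrow> x1 t = 0"
        using x1 by (auto simp: C0fun_def)
      have x2c: "continuous_on {0..} x2" and x20: "\<And>t. t < 0 \<Longrightarrow> x2 t = 0"
        using x2 by (auto simp: C0fun_def)
      have phz: "\<phi> \<circ> z = (\<lambda>t. (x1 t, x2 t + F (C\<^sub>l (x1 t))))" by (simp add: z \<phi>_def fun_eq_iff)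
      have c1: "C0fun (\<lambda>t. (x1 t, x2 t + F (C\<^sub>l (x1 t))))"
        unfolding C0fun_def using x1c x2c x10 x20
        by (auto intro!: continuous_intros Fl.continuous_on Cll.continuous_on simp: zero_prod_def Fl.zero Cll.zero)
      have c2: "continuous_on {0..} (\<lambda>t. ?A2 (x1 t, x2 t + F (C\<^sub>l (x1 t))))"
        using x1c x2c Ax1
        by (auto intro!: continuous_intros Fl.continuous_on Cll.continuous_on El.continuous_on scl.continuous_on
             Bl.continuous_on G'l.continuous_on)
      have d: "((\<lambda>t. (x1 t, x2 t + F (C\<^sub>l (x1 t)))) has_vector_derivative
                 (x1' t, x2' t + F (C\<^sub>l (x1' t)))) (at t within {0..})" if "t \<ge> 0" for t
        by (intro has_vector_derivative_Pair has_vector_derivative_add x1'd x2'd that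
              Fl.has_vector_derivative Cll.has_vector_derivative)
      have e: "(x1' t, x2' t + F (C\<^sub>l (x1' t))) =
          ?A2 (x1 t, x2 t + F (C\<^sub>l (x1 t))) + (\<lambda>_::unit. (0, 0)) ()" if "t \<ge> 0" for t
        using that x1'e x2'e y1e x1D ue
        by (simp add: Ceq2[OF x1D[OF that]] Fl.add Fl.diff Fl.neg Cll.add Cll.diff Cll.neg El.add
            Bl.add Bl.neg G'l.add FClsc Fsc Clsc algebra_simps)
      have c3: "continuous_on {0..} (\<lambda>t. (x1' t, x2' t + F (C\<^sub>l (x1' t))))"
        using x1'c x2'c by (auto intro!: continuous_intros Fl.continuous_on Cll.continuous_on)
      have ex: "\<exists>x'. continuous_on {0..} x' \<and> (\<forall>t\<ge>0. ((\<lambda>t. (x1 t, x2 t + F (C\<^sub>l (x1 t)))) has_vector_derivative x' t) (at t within {0..})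
         \<and> x' t = ?A2 (x1 t, x2 t + F (C\<^sub>l (x1 t))) + (\<lambda>_::unit. (0, 0)) ())"
        using c3 d e by blast
      have x1D2: "\<forall>t\<ge>0. (x1 t, x2 t + F (C\<^sub>l (x1 t))) \<in> DA \<times> UNIV" using x1D by simp
      show ?thesis unfolding phz Sys_def mem_Collect_eq prod.case
        using C0fun_unit c1 x1D2 c2 ex by (intro conjI) auto
    qed
    have bwd2: "\<exists>u. (u, \<psi> \<circ> z, u) \<in> serial (Sys DA A B C) (Sys UNIV E F G')"
      if "(v, z, yy) \<in> ?S" for v z yy
    proof -
      define x where "x = (\<lambda>t. fst (z t))"
      define w where "w = (\<lambda>t. snd (z t))"
      have z: "z = (\<lambda>t. (x t, w t))" by (simp add: x_def w_def)
      from that[unfolded z] have zc: "C0fun (\<lambda>t. (x t, w t))"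
        and xD: "\<And>t. t \<ge> 0 \<Longrightarrow> x t \<in> DA"
        and Az: "continuous_on {0..} (\<lambda>t. ?A2 (x t, w t))"
        and "\<exists>z'. continuous_on {0..} z' \<and> (\<forall>t\<ge>0. ((\<lambda>t. (x t, w t)) has_vector_derivative z' t) (at t within {0..})
           \<and> z' t = ?A2 (x t, w t) + (\<lambda>_::unit. (0, 0)) (v t))"
        by (simp_all add: Sys_def)
      then obtain z' where z'c: "continuous_on {0..} z'"
        and z'de: "\<forall>t\<ge>0. ((\<lambda>t. (x t, w t)) has_vector_derivative z' t) (at t within {0..})
           \<and> z' t = ?A2 (x t, w t) + (\<lambda>_::unit. (0, 0)) (v t)"
        by blast
      have zd: "\<And>t. t \<ge> 0 \<Longrightarrow> ((\<lambda>t. (x t, w t)) has_vector_derivative z' t) (at t within {0..})"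
        and ze: "\<And>t. t \<ge> 0 \<Longrightarrow> z' t = ?A2 (x t, w t) + (\<lambda>_::unit. (0, 0)) (v t)"
        using z'de by auto
      have xc: "continuous_on {0..} x" and wc: "continuous_on {0..} w"
        using continuous_on_fst[OF zc[unfolded C0fun_def, THEN conjunct1]]
          continuous_on_snd[OF zc[unfolded C0fun_def, THEN conjunct1]] by auto
      have x0: "\<And>t. t < 0 \<Longrightarrow> x t = 0" and w0: "\<And>t. t < 0 \<Longrightarrow> w t = 0"
        using zc by (auto simp: C0fun_def zero_prod_def)
      have Ax0: "continuous_on {0..} (\<lambda>t. fst (?A2 (x t, w t)))" using continuous_on_fst[OF Az] .
      have Ax: "continuous_on {0..} (\<lambda>t. A (x t))"
      proof -
        have "continuous_on {0..} (\<lambda>t. - B (G' (F (C\<^sub>l (x t)))) + B (G' (w t)))"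
          using xc wc by (intro continuous_intros Fl.continuous_on Cll.continuous_on
             Bl.continuous_on G'l.continuous_on)
        from continuous_on_diff[OF Ax0 this] show ?thesis by simp
      qed
      define x2 where "x2 = (\<lambda>t. w t - F (C\<^sub>l (x t)))"
      define u where "u = (\<lambda>t. G' (x2 t))"
      define y1 where "y1 = (\<lambda>t. if t < 0 then 0 else C (x t))"
      define x' where "x' = (\<lambda>t. fst (z' t))"
      define x2' where "x2' = (\<lambda>t. snd (z' t) - F (C\<^sub>l (fst (z' t))))"
      have psz: "\<psi> \<circ> z = (\<lambda>t. (x t, x2 t))" by (simp add: z \<psi>_def x2_def fun_eq_iff)
      have x2c: "continuous_on {0..} x2" unfolding x2_def using xc wc
        by (auto intro!: continuous_intros Fl.continuous_on Cll.continuous_on)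
      have x20: "\<And>t. t < 0 \<Longrightarrow> x2 t = 0" unfolding x2_def using x0 w0 by (simp add: Fl.zero Cll.zero)
      have uc: "continuous_on {0..} u" unfolding u_def using x2c by (rule G'l.continuous_on)
      have u0: "\<And>t. t < 0 \<Longrightarrow> u t = 0" unfolding u_def using x20 by (simp add: G'l.zero)
      have y1c: "continuous_on {0..} y1"
      proof (rule continuous_on_eq)
        show "continuous_on {0..} (\<lambda>t. C\<^sub>l (lam *\<^sub>C x t - A (x t)))" using xc Ax
          by (auto intro!: continuous_intros Cll.continuous_on sclx.continuous_on)
        show "C\<^sub>l (lam *\<^sub>C x t - A (x t)) = y1 t" if "t \<in> {0..}" for t
          using that xD Ceq by (simp add: y1_def)
      qed
      have y10: "\<And>t. t < 0 \<Longrightarrow> y1 t = 0" by (simp add: y1_def)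
      have x'c: "continuous_on {0..} x'" unfolding x'_def using z'c by (intro continuous_intros)
      have x2'c: "continuous_on {0..} x2'" unfolding x2'_def using z'c
        by (auto intro!: continuous_intros Fl.continuous_on Cll.continuous_on)
      have x'd: "(x has_vector_derivative x' t) (at t within {0..})" if "t \<ge> 0" for t
        using bounded_linear.has_vector_derivative[OF bounded_linear_fst zd[OF that]]
        by (simp add: x'_def)
      have x2'd: "(x2 has_vector_derivative x2' t) (at t within {0..})" if "t \<ge> 0" for t
      proof -
        have "((\<lambda>t. snd (x t, w t) - F (C\<^sub>l (fst (x t, w t)))) has_vector_derivative x2' t) (at t within {0..})"
          unfolding x2'_def
          by (intro has_vector_derivative_diff bounded_linear.has_vector_derivative[OF bounded_linear_snd zd[OF that]]
               Fl.has_vector_derivative Cll.has_vector_derivative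
               bounded_linear.has_vector_derivative[OF bounded_linear_fst zd[OF that]])
        then show ?thesis by (simp add: x2_def)
      qed
      have x'e: "x' t = A (x t) + B (u t)" if "t \<ge> 0" for t
        using ze[OF that] by (simp add: x'_def u_def x2_def Bl.add Bl.diff G'l.diff)
      have x2'e: "x2' t = E (x2 t) + F (y1 t)" if "t \<ge> 0" for t
        using ze[OF that] that xD[OF that]
        by (simp add: Ceq2[OF xD[OF that]] Fsc Clsc x2'_def x2_def y1_def Fl.add Fl.diff Fl.neg
            Cll.add Cll.diff Cll.neg El.diff Bl.add Bl.neg FClsc algebra_simps)
      have S1: "(u, x, y1) \<in> Sys DA A B C"
      proof -
        have "C0fun x" using xc x0 by (simp add: C0fun_def)
        moreover have "C0fun y1" using y1c y10 by (simp add: C0fun_def)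
        moreover have "C0fun u" using uc u0 by (simp add: C0fun_def)
        moreover have "\<forall>t\<ge>0. y1 t = C (x t)" by (simp add: y1_def)
        moreover have "\<exists>x'. continuous_on {0..} x' \<and> (\<forall>t\<ge>0. (x has_vector_derivative x' t) (at t within {0..})
                      \<and> x' t = A (x t) + B (u t))" using x'c x'd x'e by blast
        ultimately show ?thesis unfolding Sys_def mem_Collect_eq prod.case using xD Ax by blast
      qed
      have S2: "(y1, x2, u) \<in> Sys UNIV E F G'"
      proof -
        have "C0fun x2" using x2c x20 by (simp add: C0fun_def)
        moreover have "C0fun y1" using y1c y10 by (simp add: C0fun_def)
        moreover have "C0fun u" using uc u0 by (simp add: C0fun_def)
        moreover have "\<forall>t\<ge>0. u t = G' (x2 t)" by (simp add: u_def)
        moreover have "continuous_on {0..} (\<lambda>t. E (x2 t))" using x2c by (rule El.continuous_on)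
        moreover have "\<exists>x'. continuous_on {0..} x' \<and> (\<forall>t\<ge>0. (x2 has_vector_derivative x' t) (at t within {0..})
                      \<and> x' t = E (x2 t) + F (y1 t))" using x2'c x2'd x2'e by blast
        ultimately show ?thesis unfolding Sys_def mem_Collect_eq prod.case by blast
      qed
      have "(u, \<psi> \<circ> z, u) \<in> serial (Sys DA A B C) (Sys UNIV E F G')"
        unfolding psz serial_def using S1 S2 by blast
      then show ?thesis by blast
    qed
    show ?thesis unfolding rel_iso_def
    proof (intro exI conjI)
      show "top_lin_iso \<phi>" by (rule iso)
      show "(\<lambda>(u, x, y). (u, \<phi> \<circ> x, y)) ` Close (serial (Sys DA A B C) (Sys UNIV E F G')) = ?S"
        (is "?L = _")
      proof
        show "?L \<subseteq> ?S" using fwd2 by (auto simp: Close_def)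
        show "?S \<subseteq> ?L"
        proof
          fix p assume "p \<in> ?S"
          then obtain v z yy where p: "p = (v, z, yy)" and m: "(v, z, yy) \<in> ?S" by (cases p) auto
          from bwd2[OF m] obtain u where "(u, \<psi> \<circ> z, u) \<in> serial (Sys DA A B C) (Sys UNIV E F G')" by blast
          then have "((\<lambda>_. ()), \<psi> \<circ> z, (\<lambda>_. ())) \<in> Close (serial (Sys DA A B C) (Sys UNIV E F G'))"
            unfolding Close_def by blast
          moreover have "v = (\<lambda>_. ())" "yy = (\<lambda>_. ())" by (simp_all add: fun_eq_iff)
          ultimately show "p \<in> ?L" unfolding p
            by (intro image_eqI[where x="((\<lambda>_. ()), \<psi> \<circ> z, (\<lambda>_. ()))"]) (simp_all add: \<phi>\<psi>o)
        qed
      qed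
    qed
  qed
  show ?thesis using part1 part2 by blast
qed

end
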